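(* Let $a,b>0$ with $\min(a,b)\ge 1$, let $s\in\mathbb{R}$ and let $\gamma>0$ be a constant. Then the function $$ g(x)=\gamma\left(\left(\tfrac{a}{2}\right)^2+\left(\tfrac{x}{2}\right)^2\right)^{\frac{a-1}{2}}\left(\left(\tfrac{b}{2}\right)^2+\left(\tfrac{s-x}{2}\right)^2\right)^{\frac{b-1}{2}}e^{-x\arctan\left(\frac{x}{a}\right)-(s-x)\arctan\left(\frac{s-x}{b}\right)},\quad x\in\mathbb{R}, $$ is log-concave on $\mathbb{R}$.
   Context: A positive function $g$ on $\mathbb{R}$ is log-concave if $\log g$ is concave. *)

theory Defs
  imports "HOL-Analysis.Analysis"
begin

definition log_concave :: "(real \<Rightarrow> real) \<Rightarrow> bool" where
  "log_concave g \<longleftrightarrow> (\<forall>x. g x > 0) \<and> concave_on UNIV (\<lambda>x. ln (g x))"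

end

theory Submission
  imports Defs
begin

definition hh :: "real \<Rightarrow> real \<Rightarrow> real" where
  "hh c x = x * arctan (x / c) - (c - 1)/2 * ln ((c/2)^2 + (x/2)^2)"

lemma hh_d1:
  assumes "c > 0"
  shows "(hh c has_real_derivative (arctan (x/c) + x/(c^2+x^2))) (at x)"
proof -
  have p: "c^2 + x^2 > 0" using assms by (simp add: add_pos_nonneg)
  have q: "(c/2)^2 + (x/2)^2 > 0" using assms by (simp add: add_pos_nonneg)
  have q2: "c*c+x*x > 0" using p by (simp add: power2_eq_square)
  have e0: "1 + (x/c)^2 = (c^2+x^2)/c^2" using assms by (simp add: field_simps power_divide)
  have e: "1 / c / (1 + (x/c)^2) = c / (c^2+x^2)" unfolding e0 using assms p by (simp add: power2_eq_square)
  have "(hh c has_real_derivative (arctan (x/c) + x * (1 / c / (1 + (x/c)^2)) - (c - 1)/2 * (x / 2 / ((c/2)^2 + (x/2)^2)))) (at x)"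
    unfolding hh_def[abs_def] using assms q q2
    apply (auto intro!: derivative_eq_intros) apply (simp_all add: inverse_eq_divide power2_eq_square algebra_simps) apply (simp add: field_simps) done
  also have "arctan (x/c) + x * (1 / c / (1 + (x/c)^2)) - (c - 1)/2 * (x / 2 / ((c/2)^2 + (x/2)^2)) = arctan (x/c) + x/(c^2+x^2)"
  proof -
    have e2: "(c/2)^2+(x/2)^2 = (c^2+x^2)/4" by (simp add: power_divide)
    have g: "\<And>D::real. D \<noteq> 0 \<Longrightarrow> arctan (x/c) + x*(c/D) - (c-1)/2*(x/2/(D/4)) = arctan (x/c) + x/D"
      by (simp add: field_simps)
    have D0: "c^2+x^2 \<noteq> 0" using p by linarith
    show ?thesis unfolding e e2 by (rule g[OF D0])
  qed
  finally show ?thesis .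
qed

lemma hh_d2:
  assumes "c > 0"
  shows "((\<lambda>x. arctan (x/c) + x/(c^2+x^2)) has_real_derivative
          ((c^2 + c^3 + (c - 1) * x^2) / (c^2+x^2)^2)) (at x)"
proof -
  have p: "c^2 + x^2 > 0" using assms by (simp add: add_pos_nonneg)
  have e0: "1 + (x/c)^2 = (c^2+x^2)/c^2" using assms by (simp add: field_simps power_divide)
  have e: "1 / c / (1 + (x/c)^2) = c / (c^2+x^2)" unfolding e0 using assms p by (simp add: power2_eq_square)
  have "((\<lambda>x. arctan (x/c) + x/(c^2+x^2)) has_real_derivative
          (1 / c / (1 + (x/c)^2) + ((c^2+x^2) - x * (2 * x)) / (c^2+x^2)^2)) (at x)"
       using assms p apply (auto intro!: derivative_eq_intros) apply (simp_all add: inverse_eq_divide power2_eq_square) done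
  also have "1 / c / (1 + (x/c)^2) + ((c^2+x^2) - x * (2 * x)) / (c^2+x^2)^2 = (c^2 + c^3 + (c - 1) * x^2) / (c^2+x^2)^2"
  proof -
    have g: "\<And>D::real. D \<noteq> 0 \<Longrightarrow> c / D + (D - x * (2 * x)) / D^2 = (c^2 + c^3 + (c - 1) * x^2) / D^2 \<longleftrightarrow> c*D + D - 2*x^2 = c^2 + c^3 + (c - 1) * x^2"
      using assms by (simp add: field_simps power2_eq_square)
    have h3: "c*(c^2+x^2) + (c^2+x^2) - 2*x^2 = c^2 + c^3 + (c - 1) * x^2" by (simp add: algebra_simps power2_eq_square power3_eq_cube)
    have D0: "c^2+x^2 \<noteq> 0" using p by linarith
    show ?thesis unfolding e g[OF D0] by (rule h3)
  qed
  finally show ?thesis .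
qed

lemma hh_convex:
  assumes "c \<ge> 1"
  shows "convex_on UNIV (hh c)"
proof (rule f''_ge0_imp_convex[OF convex_UNIV])
  show "\<And>x. (hh c has_real_derivative (arctan (x/c) + x/(c^2+x^2))) (at x)"
    using hh_d1 assms by simp
  show "\<And>x. ((\<lambda>x. arctan (x/c) + x/(c^2+x^2)) has_real_derivative
          ((c^2 + c^3 + (c - 1) * x^2) / (c^2+x^2)^2)) (at x)"
    using hh_d2 assms by simp
  show "\<And>x. 0 \<le> (c^2 + c^3 + (c - 1) * x^2) / (c^2+x^2)^2"
    using assms by (intro divide_nonneg_nonneg) auto
qed

lemma convex_reflect:
  assumes "convex_on UNIV f"
  shows "convex_on UNIV (\<lambda>x::real. f (s - x))"
proof (rule convex_onI)
  fix t x y :: real assume t: "t > 0" "t < 1"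
  have "s - ((1 - t) *\<^sub>R x + t *\<^sub>R y) = (1 - t) *\<^sub>R (s - x) + t *\<^sub>R (s - y)"
    by (simp add: algebra_simps)
  then show "f (s - ((1 - t) *\<^sub>R x + t *\<^sub>R y)) \<le> (1 - t) * f (s - x) + t * f (s - y)"
    using convex_onD[OF assms, of t "s - x" "s - y"] t by simp
qed simp

theorem lemma1:
  fixes a b s \<gamma> :: real
  assumes "a > 0" and "b > 0" and "min a b \<ge> 1" and "\<gamma> > 0"
  shows "log_concave (\<lambda>x. \<gamma> * ((a/2)^2 + (x/2)^2) powr ((a - 1)/2)
            * ((b/2)^2 + ((s - x)/2)^2) powr ((b - 1)/2)
            * exp (- x * arctan (x / a) - (s - x) * arctan ((s - x) / b)))"
proof -
  have pa: "\<And>x. (a/2)^2 + (x/2)^2 > 0" using assms by (simp add: add_pos_nonneg)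
  have pb: "\<And>x. (b/2)^2 + ((s-x)/2)^2 > 0" using assms by (simp add: add_pos_nonneg)
  have eq: "ln (\<gamma> * ((a/2)^2 + (x/2)^2) powr ((a - 1)/2)
            * ((b/2)^2 + ((s - x)/2)^2) powr ((b - 1)/2)
            * exp (- x * arctan (x / a) - (s - x) * arctan ((s - x) / b)))
        = - (ln (1/\<gamma>) + hh a x + hh b (s - x))" for x
  proof -
    have g0: "\<gamma> > 0" using assms by simp
    have A: "((a/2)^2 + (x/2)^2) powr ((a - 1)/2) > 0" using powr_gt_zero pa[of x] by (metis less_irrefl)
    have B: "((b/2)^2 + ((s - x)/2)^2) powr ((b - 1)/2) > 0" using powr_gt_zero pb[of x] by (metis less_irrefl)
    have "ln (\<gamma> * ((a/2)^2 + (x/2)^2) powr ((a - 1)/2)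
            * ((b/2)^2 + ((s - x)/2)^2) powr ((b - 1)/2)
            * exp (- x * arctan (x / a) - (s - x) * arctan ((s - x) / b)))
       = ln \<gamma> + ln (((a/2)^2 + (x/2)^2) powr ((a - 1)/2)) + ln (((b/2)^2 + ((s - x)/2)^2) powr ((b - 1)/2))
         + (- x * arctan (x / a) - (s - x) * arctan ((s - x) / b))"
      using g0 A B by (simp add: ln_mult)
    also have "\<dots> = ln \<gamma> + (a - 1)/2 * ln ((a/2)^2 + (x/2)^2) + (b - 1)/2 * ln ((b/2)^2 + ((s - x)/2)^2)
         + (- x * arctan (x / a) - (s - x) * arctan ((s - x) / b))"
      using pa[of x] pb[of x] by (simp add: ln_powr)
    also have "\<dots> = - (ln (1/\<gamma>) + hh a x + hh b (s - x))"
      using g0 by (simp add: hh_def ln_div algebra_simps)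
    finally show ?thesis .
  qed
  have ha: "convex_on UNIV (hh a)" using assms by (intro hh_convex) simp
  have hb: "convex_on UNIV (\<lambda>x. hh b (s - x))" using assms by (intro convex_reflect hh_convex) simp
  have c0: "convex_on UNIV (\<lambda>x. ln (1/\<gamma>))" by (simp add: convex_on_const)
  have c: "convex_on UNIV (\<lambda>x. ln (1/\<gamma>) + hh a x + hh b (s - x))"
    by (rule convex_on_add[OF convex_on_add[OF c0 ha] hb])
  have pos: "\<forall>x. \<gamma> * ((a/2)^2 + (x/2)^2) powr ((a - 1)/2)
            * ((b/2)^2 + ((s - x)/2)^2) powr ((b - 1)/2)
            * exp (- x * arctan (x / a) - (s - x) * arctan ((s - x) / b)) > 0"
    using assms pa pb by (intro allI mult_pos_pos) auto
  show ?thesis unfolding log_concave_def concave_on_def eq minus_minus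
    using pos c by blast
qed

end
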